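(* For every deterministic parity automaton $\mathcal{A}=(Q,Q_0,\delta,\mu)$ with $m$ colors over a finite alphabet $\Sigma$, every bound $n\in\mathbb{N}$ and every $m'$ with $0<m'<m$, there is a deterministic parity automaton $\mathcal{A}'$ with $m'$ colors and $(n\cdot|Q|+1)\cdot|Q|\cdot(m-m'+2)$ states such that $L(\mathcal{A}')\subseteq L(\mathcal{A})$ and $L_n(L(\mathcal{A}'))=L_n(L(\mathcal{A}))$.
   Context: A lasso of length $n$ is a pair $(u,v)$ with $u\in\Sigma^*$, $v\in\Sigma^+$, $|u\cdot v|=n$, inducing $u\cdot v^\omega$. For $\psi\subseteq\Sigma^\omega$, $L_n(\psi)=\{u\cdot v^\omega \in \psi \mid u\in\Sigma^*, v\in\Sigma^+, |u\cdot v|=n\}$. A parity automaton is $(Q,Q_0,\delta,\mu)$ with finite $Q$, $Q_0\subseteq Q$, $\delta:Q\times\Sigma\to\mathcal{P}(Q)$, coloring $\mu$; "with $m$ colors" means $\mu:Q\to\{0,\dots,m-1\}$. A run on $\alpha_1\alpha_2\cdots$ is $q_0q_1\cdots$ with $q_0\in Q_0$ and $q_{i+1}\in\delta(q_i,\alpha_{i+1})$; it is accepting if the highest color occurring infinitely often along it is even; $L(\cdot)$ is the set of words with an accepting run. Deterministic means $|Q_0|=1$ and $|\delta(q,\alpha)|\le1$ for all $q,\alpha$ (missing successors allowed). *)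

theory Defs
  imports Main "HOL-Library.Omega_Words_Fun"
begin

record ('q, 'a) pa =
  states :: "'q set"
  init   :: "'q set"
  trans  :: "'q \<Rightarrow> 'a \<Rightarrow> 'q set"
  color  :: "'q \<Rightarrow> nat"

definition parity_automaton :: "('q, 'a) pa \<Rightarrow> nat \<Rightarrow> bool" where
  "parity_automaton A m \<longleftrightarrow>
     finite (states A) \<and> init A \<subseteq> states A \<and>
     (\<forall>q\<in>states A. \<forall>a. trans A q a \<subseteq> states A) \<and>
     (\<forall>q\<in>states A. color A q < m)"

definition deterministic :: "('q, 'a) pa \<Rightarrow> bool" where
  "deterministic A \<longleftrightarrow>
     card (init A) = 1 \<and> (\<forall>q\<in>states A. \<forall>a. card (trans A q a) \<le> 1)"

text \<open>Run on the word w = w 0, w 1, ... (w i is the letter alpha_(i+1)).\<close>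
definition is_run :: "('q, 'a) pa \<Rightarrow> 'a word \<Rightarrow> 'q word \<Rightarrow> bool" where
  "is_run A w r \<longleftrightarrow> r 0 \<in> init A \<and> (\<forall>i. r (Suc i) \<in> trans A (r i) (w i))"

definition accepting :: "('q, 'a) pa \<Rightarrow> 'q word \<Rightarrow> bool" where
  "accepting A r \<longleftrightarrow> even (Max {c. \<exists>\<^sub>\<infinity>i. color A (r i) = c})"

definition lang :: "('q, 'a) pa \<Rightarrow> 'a word set" where
  "lang A = {w. \<exists>r. is_run A w r \<and> accepting A r}"

definition lasso_lang :: "nat \<Rightarrow> 'a word set \<Rightarrow> 'a word set" where
  "lasso_lang n \<psi> = {w \<in> \<psi>. \<exists>u v. v \<noteq> [] \<and> length (u @ v) = n \<and> w = u \<frown> v\<^sup>\<omega>}"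

end

theory Submission
  imports Defs
begin


definition infs :: "(nat \<Rightarrow> nat) \<Rightarrow> nat set" where
  "infs f = {c. \<exists>\<^sub>\<infinity>i. f i = c}"

lemma infs_iff: "c \<in> infs f \<longleftrightarrow> infinite {i. f i = c}"
  unfolding infs_def INFM_iff_infinite by simp

lemma infs_sub: assumes "\<And>i. f i < M" shows "infs f \<subseteq> {..<M}"
proof
  fix c assume "c \<in> infs f"
  then have "{i. f i = c} \<noteq> {}" unfolding infs_iff using infinite_imp_nonempty by blast
  then obtain i where "f i = c" by blast
  then show "c \<in> {..<M}" using assms by auto
qed

lemma infs_finite: assumes "\<And>i. f i < M" shows "finite (infs f)"
  using infs_sub[OF assms] by (rule finite_subset) simp

lemma infs_nonempty: assumes "\<And>i. f i < M" shows "infs f \<noteq> {}"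
proof -
  have "f ` UNIV \<subseteq> {..<M}" using assms by auto
  then have "finite (f ` UNIV)" by (rule finite_subset) simp
  then obtain y where "infinite (f -` {y})" by (rule inf_img_fin_domE[OF _ infinite_UNIV_nat])
  moreover have "f -` {y} = {i. f i = y}" by auto
  ultimately have "y \<in> infs f" unfolding infs_iff by simp
  then show ?thesis by blast
qed

lemma infs_eventually: assumes "\<And>i. f i < M" shows "\<exists>T. \<forall>i\<ge>T. f i \<in> infs f"
proof -
  have sub: "{i. f i \<notin> infs f} \<subseteq> (\<Union>c\<in>{..<M} - infs f. {i. f i = c})" using assms by blast
  have fin: "\<forall>c\<in>{..<M} - infs f. finite {i. f i = c}" by (simp add: infs_iff)
  have "finite (\<Union>c\<in>{..<M} - infs f. {i. f i = c})"
    by (rule finite_UN_I) (simp, use fin in blast)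
  then have "finite {i. f i \<notin> infs f}" by (rule finite_subset[OF sub])
  then obtain k where k: "{i. f i \<notin> infs f} \<subseteq> {..<k}" using finite_nat_bounded by blast
  have "\<forall>i\<ge>k. f i \<in> infs f"
  proof (intro allI impI)
    fix i assume "k \<le> i"
    then have "i \<notin> {..<k}" by simp
    then show "f i \<in> infs f" using k by blast
  qed
  then show ?thesis by blast
qed

lemma infs_comp: assumes "\<And>i. f i < M" shows "infs (\<lambda>i. g (f i)) = g ` infs f"
proof
  show "infs (\<lambda>i. g (f i)) \<subseteq> g ` infs f"
  proof
    fix d assume d: "d \<in> infs (\<lambda>i. g (f i))"
    have sub: "{i. g (f i) = d} \<subseteq> (\<Union>c\<in>{..<M}. {i. f i = c \<and> g c = d})" using assms by blast
    have inf: "infinite {i. g (f i) = d}" using d unfolding infs_iff by simp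
    have "\<not> (\<forall>c\<in>{..<M}. finite {i. f i = c \<and> g c = d})"
    proof
      assume "\<forall>c\<in>{..<M}. finite {i. f i = c \<and> g c = d}"
      then have "finite (\<Union>c\<in>{..<M}. {i. f i = c \<and> g c = d})"
        by (intro finite_UN_I) auto
      then show False using inf finite_subset[OF sub] by simp
    qed
    then obtain c where c: "c < M" "infinite {i. f i = c \<and> g c = d}" by blast
    then have "{i. f i = c \<and> g c = d} \<noteq> {}" using infinite_imp_nonempty by blast
    then have gc: "g c = d" by blast
    then have "{i. f i = c \<and> g c = d} = {i. f i = c}" by simp
    then have "c \<in> infs f" using c(2) unfolding infs_iff by simp
    then show "d \<in> g ` infs f" using gc by blast
  qed
next
  show "g ` infs f \<subseteq> infs (\<lambda>i. g (f i))"
  proof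
    fix d assume "d \<in> g ` infs f"
    then obtain c where c: "c \<in> infs f" "d = g c" by blast
    have "{i. f i = c} \<subseteq> {i. g (f i) = d}" using c by blast
    moreover have "infinite {i. f i = c}" using c(1) unfolding infs_iff .
    ultimately have "infinite {i. g (f i) = d}" by (rule infinite_super)
    then show "d \<in> infs (\<lambda>i. g (f i))" unfolding infs_iff .
  qed
qed

lemma Max_infs_in: assumes "\<And>i. f i < M" shows "Max (infs f) \<in> infs f"
  using infs_finite[of f M, OF assms] infs_nonempty[of f M, OF assms] by simp

lemma infs_mono_Max: assumes "\<And>i. f i < M" "mono g"
  shows "Max (infs (\<lambda>i. g (f i))) = g (Max (infs f))"
  using infs_comp[of f M g, OF assms(1)] mono_Max_commute[OF assms(2) infs_finite[of f M, OF assms(1)] infs_nonempty[of f M, OF assms(1)]]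
  by simp




locale win =
  fixes L m e :: nat
  assumes L_pos: "0 < L" and e_lt: "e < m - 1" and e_even: "even e"
begin

definition stp :: "nat \<times> nat \<Rightarrow> nat \<Rightarrow> nat \<times> nat" where
  "stp kv c = (if Suc (fst kv) < L then (Suc (fst kv), max (snd kv) c) else (0, max e c))"

definition dead :: "nat \<times> nat \<Rightarrow> nat \<Rightarrow> bool" where
  "dead kv c = (if Suc (fst kv) < L then odd c \<and> c = m - 1 \<and> snd kv \<noteq> m - 1
                else (odd (snd kv) \<and> snd kv \<noteq> m - 1) \<or> (odd c \<and> c = m - 1))"

primrec kvs :: "(nat \<Rightarrow> nat) \<Rightarrow> nat \<Rightarrow> nat \<times> nat" where
  "kvs cs 0 = (0, m - 1)"
| "kvs cs (Suc t) = stp (kvs cs t) (cs (Suc t))"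

lemma kvs_fst: "fst (kvs cs t) = t mod L"
proof (induction t)
  case 0 then show ?case by simp
next
  case (Suc t)
  have "t mod L < L" using L_pos by simp
  then show ?case using Suc by (simp add: stp_def mod_Suc)
qed

lemma kvs_first: assumes "\<And>i. cs i < m" shows "t < L \<Longrightarrow> snd (kvs cs t) = m - 1"
proof (induction t)
  case 0 then show ?case by simp
next
  case (Suc t)
  then have "fst (kvs cs t) = t" using kvs_fst by simp
  moreover have "cs (Suc t) \<le> m - 1" using assms[of "Suc t"] by simp
  ultimately show ?case using Suc by (simp add: stp_def)
qed

lemma kvs_win:
  assumes "\<And>i. cs i < m"
  shows "L \<le> t \<Longrightarrow> (\<forall>s. t - t mod L \<le> s \<and> s \<le> t \<longrightarrow> cs s \<le> snd (kvs cs t)) \<and> e \<le> snd (kvs cs t)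
     \<and> (\<forall>bd. e \<le> bd \<longrightarrow> (\<forall>s. t - t mod L \<le> s \<and> s \<le> t \<longrightarrow> cs s \<le> bd) \<longrightarrow> snd (kvs cs t) \<le> bd)"
proof (induction t)
  case 0 then show ?case using L_pos by simp
next
  case (Suc t)
  have k: "fst (kvs cs t) = t mod L" by (rule kvs_fst)
  show ?case
  proof (cases "Suc (t mod L) < L")
    case True
    then have m1: "Suc t mod L = Suc (t mod L)" by (simp add: mod_Suc)
    have tL: "L \<le> t"
    proof (rule ccontr)
      assume "\<not> L \<le> t"
      then have "t mod L = t" by simp
      then show False using True Suc.prems by simp
    qed
    have ws: "Suc t - Suc t mod L = t - t mod L" using m1 by simp
    have st: "kvs cs (Suc t) = (Suc (t mod L), max (snd (kvs cs t)) (cs (Suc t)))"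
      using True k by (simp add: stp_def)
    have IH: "(\<forall>s. t - t mod L \<le> s \<and> s \<le> t \<longrightarrow> cs s \<le> snd (kvs cs t)) \<and> e \<le> snd (kvs cs t)
     \<and> (\<forall>bd. e \<le> bd \<longrightarrow> (\<forall>s. t - t mod L \<le> s \<and> s \<le> t \<longrightarrow> cs s \<le> bd) \<longrightarrow> snd (kvs cs t) \<le> bd)"
      using Suc.IH tL by blast
    have le: "t - t mod L \<le> Suc t" by simp
    show ?thesis unfolding st ws snd_conv
    proof (intro conjI allI impI)
      fix s assume "t - t mod L \<le> s \<and> s \<le> Suc t"
      then show "cs s \<le> max (snd (kvs cs t)) (cs (Suc t))"
        using IH by (cases "s = Suc t") auto
    next
      have "e \<le> snd (kvs cs t)" using IH by blast
      then show "e \<le> max (snd (kvs cs t)) (cs (Suc t))" by simp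
    next
      fix bd assume "e \<le> bd" and h: "\<forall>s. t - t mod L \<le> s \<and> s \<le> Suc t \<longrightarrow> cs s \<le> bd"
      then have "snd (kvs cs t) \<le> bd" using IH by auto
      moreover have "cs (Suc t) \<le> bd" using h le by blast
      ultimately show "max (snd (kvs cs t)) (cs (Suc t)) \<le> bd" by simp
    qed
  next
    case False
    then have m1: "Suc t mod L = 0" using L_pos mod_Suc[of t L] mod_less_divisor[OF L_pos, of t] by auto
    have st: "kvs cs (Suc t) = (0, max e (cs (Suc t)))"
      using False k by (simp add: stp_def)
    show ?thesis unfolding st m1 snd_conv
    proof (intro conjI allI impI)
      fix s assume "Suc t - 0 \<le> s \<and> s \<le> Suc t"
      then have "s = Suc t" by simp
      then show "cs s \<le> max e (cs (Suc t))" by simp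
    next
      show "e \<le> max e (cs (Suc t))" by simp
    next
      fix bd assume "e \<le> bd" and h: "\<forall>s. Suc t - 0 \<le> s \<and> s \<le> Suc t \<longrightarrow> cs s \<le> bd"
      then show "max e (cs (Suc t)) \<le> bd" by auto
    qed
  qed
qed

lemma kvs_noodd:
  assumes "\<And>i. cs i < m" and nd: "\<And>t. \<not> dead (kvs cs t) (cs (Suc t))" and od: "odd (m - 1)"
  shows "L \<le> t \<Longrightarrow> snd (kvs cs t) \<noteq> m - 1"
proof (induction t)
  case 0 then show ?case using L_pos by simp
next
  case (Suc t)
  have k: "fst (kvs cs t) = t mod L" by (rule kvs_fst)
  have d: "\<not> dead (kvs cs t) (cs (Suc t))" by (rule nd)
  show ?case
  proof (cases "Suc (t mod L) < L")
    case True
    have tL: "L \<le> t"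
    proof (rule ccontr)
      assume "\<not> L \<le> t"
      then have "t mod L = t" by simp
      then show False using True Suc.prems by simp
    qed
    then have v: "snd (kvs cs t) \<noteq> m - 1" using Suc.IH by blast
    have "cs (Suc t) \<noteq> m - 1"
    proof
      assume c: "cs (Suc t) = m - 1"
      have "dead (kvs cs t) (cs (Suc t))" unfolding dead_def using True k v od c by simp
      then show False using d by blast
    qed
    then show ?thesis using True k v by (simp add: stp_def max_def)
  next
    case False
    have "cs (Suc t) \<noteq> m - 1"
    proof
      assume c: "cs (Suc t) = m - 1"
      have "dead (kvs cs t) (cs (Suc t))" unfolding dead_def using False k od c by simp
      then show False using d by blast
    qed
    then show ?thesis using False k e_lt by (simp add: stp_def max_def)
  qed
qed

end



context win begin

lemma sound:
  assumes cs: "\<And>i. cs i < m" and nd: "\<And>t. \<not> dead (kvs cs t) (cs (Suc t))"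
    and acc: "even (min (Max (infs cs)) e)"
  shows "even (Max (infs cs))"
proof (rule ccontr)
  define c where "c = Max (infs cs)"
  assume "\<not> even (Max (infs cs))"
  then have oc: "odd c" unfolding c_def by simp
  have fin: "finite (infs cs)" using infs_finite[of cs m] cs by blast
  have cin: "c \<in> infs cs" unfolding c_def using Max_infs_in[of cs m] cs by blast
  have "min c e \<noteq> c" using acc oc unfolding c_def by auto
  then have ec: "e < c" by simp
  obtain T where T: "\<And>i. T \<le> i \<Longrightarrow> cs i \<in> infs cs" using infs_eventually[of cs m] cs by blast
  have Tc: "cs i \<le> c" if "T \<le> i" for i unfolding c_def using T[OF that] fin by simp
  from cin have "\<exists>\<^sub>\<infinity>i. cs i = c" unfolding infs_def by simp
  then obtain t1 where t1: "T + 2 * L \<le> t1" "cs t1 = c" unfolding INFM_nat_le by blast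
  define a where "a = t1 - t1 mod L"
  define te where "te = a + (L - 1)"
  have a_eq: "a = L * (t1 div L)" unfolding a_def by (simp add: minus_mod_eq_mult_div)
  have tml: "t1 mod L < L" using L_pos by simp
  have "L \<le> t1" using t1(1) by simp
  then have "L div L \<le> t1 div L" by (rule div_le_mono)
  then have "t1 div L \<ge> 1" using L_pos by simp
  then have aL: "L \<le> a" unfolding a_eq by simp
  have aT: "T \<le> a" unfolding a_def using t1(1) tml by linarith
  have at1: "a \<le> t1" "t1 \<le> te" unfolding a_def te_def using tml by linarith+
  have "te mod L = ((L - 1) + L * (t1 div L)) mod L" unfolding te_def a_eq by (simp add: add.commute)
  also have "\<dots> = (L - 1) mod L" by (rule mod_mult_self2)
  also have "\<dots> = L - 1" using L_pos by simp
  finally have temod: "te mod L = L - 1" .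
  have tews: "te - te mod L = a" using temod unfolding te_def by simp
  have teL: "L \<le> te" using aL unfolding te_def by simp
  note W = kvs_win[of cs, OF cs teL, unfolded tews]
  have W1: "\<forall>s. a \<le> s \<and> s \<le> te \<longrightarrow> cs s \<le> snd (kvs cs te)" using W by (rule conjunct1)
  have W3: "\<forall>bd. e \<le> bd \<longrightarrow> (\<forall>s. a \<le> s \<and> s \<le> te \<longrightarrow> cs s \<le> bd) \<longrightarrow> snd (kvs cs te) \<le> bd"
    using W by (rule conjunct2[OF conjunct2])
  have "a \<le> t1 \<and> t1 \<le> te \<longrightarrow> cs t1 \<le> snd (kvs cs te)" using W1 by (rule spec)
  then have v1: "c \<le> snd (kvs cs te)" using at1 t1(2) by simp
  have "\<forall>s. a \<le> s \<and> s \<le> te \<longrightarrow> cs s \<le> c"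
  proof (intro allI impI)
    fix s assume "a \<le> s \<and> s \<le> te"
    then have "T \<le> s" using aT by simp
    then show "cs s \<le> c" by (rule Tc)
  qed
  then have v2: "snd (kvs cs te) \<le> c" using W3 ec by simp
  have v: "snd (kvs cs te) = c" using v1 v2 by simp
  have "\<not> dead (kvs cs te) (cs (Suc te))" by (rule nd)
  moreover have "fst (kvs cs te) = L - 1" using kvs_fst temod by simp
  ultimately have "\<not> (odd c \<and> c \<noteq> m - 1)" unfolding dead_def v using L_pos by simp
  then have cm: "c = m - 1" using oc by simp
  have "snd (kvs cs te) \<noteq> m - 1" using kvs_noodd[OF cs nd _ teL] oc cm by simp
  then show False using v cm by simp
qed

lemma complete:
  assumes cs: "\<And>i. cs i < m" and P: "0 < P" "t0 + P \<le> L"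
    and per: "\<And>i. t0 \<le> i \<Longrightarrow> cs (i + P) = cs i"
    and ev: "even (Max (infs cs))"
  shows "\<not> dead (kvs cs t) (cs (Suc t))"
proof -
  define c where "c = Max (infs cs)"
  have fin: "finite (infs cs)" using infs_finite[of cs m] cs by blast
  have cin: "c \<in> infs cs" unfolding c_def using Max_infs_in[of cs m] cs by blast
  have cm: "c < m" using cin infs_sub[of cs m] cs by blast
  have perj: "cs (i + j * P) = cs i" if "t0 \<le> i" for i j
  proof (induction j)
    case 0 then show ?case by simp
  next
    case (Suc j)
    have "cs (i + Suc j * P) = cs ((i + j * P) + P)" by (simp add: algebra_simps)
    also have "\<dots> = cs (i + j * P)" using per that by simp
    finally show ?case using Suc by simp
  qed
  have P1: "cs i \<le> c" if "t0 \<le> i" for i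
  proof -
    have "\<exists>\<^sub>\<infinity>n. cs n = cs i" unfolding INFM_nat_le
    proof
      fix M show "\<exists>n\<ge>M. cs n = cs i"
      proof (intro exI[of _ "i + M * P"] conjI)
        have "M \<le> M * P" using P(1) by simp
        then show "M \<le> i + M * P" by linarith
        show "cs (i + M * P) = cs i" using perj[OF that, of M] .
      qed
    qed
    then have "cs i \<in> infs cs" unfolding infs_def by simp
    then show ?thesis unfolding c_def using fin by simp
  qed
  have P2: "\<exists>s. a \<le> s \<and> s < a + P \<and> cs s = c" if "t0 \<le> a" for a
  proof -
    from cin have "\<exists>\<^sub>\<infinity>i. cs i = c" unfolding infs_def by simp
    then obtain i where i: "a \<le> i" "cs i = c" unfolding INFM_nat_le by blast
    define s where "s = a + (i - a) mod P"
    have "(i - a) mod P + ((i - a) div P) * P = i - a" by (rule mod_div_mult_eq)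
    then have "i = s + ((i - a) div P) * P" unfolding s_def using i(1) by linarith
    then have "cs i = cs s" using perj[of s "(i - a) div P"] that unfolding s_def by simp
    moreover have "s < a + P" unfolding s_def using P(1) by simp
    moreover have "a \<le> s" unfolding s_def by simp
    ultimately show ?thesis using i by (intro exI[of _ s]) simp
  qed
  define v where "v = snd (kvs cs t)"
  define cc where "cc = cs (Suc t)"
  have k: "fst (kvs cs t) = t mod L" by (rule kvs_fst)
  have late: "\<not> (odd cc \<and> cc = m - 1)" if "t0 \<le> Suc t"
  proof
    assume h: "odd cc \<and> cc = m - 1"
    have "cc \<le> c" using P1[OF that] unfolding cc_def .
    then have "c = cc" using h cm by simp
    then have "odd c" using h by metis
    then show False using ev unfolding c_def by simp
  qed
  show ?thesis
  proof (cases "Suc (t mod L) < L")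
    case True
    show ?thesis
    proof (cases "t0 \<le> Suc t")
      case True2: True
      have "dead (kvs cs t) cc = (odd cc \<and> cc = m - 1 \<and> snd (kvs cs t) \<noteq> m - 1)"
        unfolding dead_def using True k by simp
      then show ?thesis using late[OF True2] unfolding cc_def by blast
    next
      case False
      then have "t < L" using P by simp
      then have "v = m - 1" unfolding v_def using kvs_first[OF cs] by simp
      then show ?thesis using True k unfolding dead_def v_def by simp
    qed
  next
    case False
    have tmL: "t mod L < L" using L_pos by simp
    have st: "t0 \<le> Suc t"
    proof (rule ccontr)
      assume "\<not> t0 \<le> Suc t"
      then have "t mod L = t" "Suc t < L" using P by simp_all
      then show False using False by simp
    qed
    have "\<not> (odd v \<and> v \<noteq> m - 1)"
    proof (cases "t < L")
      case True
      then have "v = m - 1" unfolding v_def using kvs_first[OF cs] by simp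
      then show ?thesis by simp
    next
      case tL: False
      define a where "a = t - t mod L"
      have a_eq: "a = L * (t div L)" unfolding a_def by (simp add: minus_mod_eq_mult_div)
      have "L \<le> t" using tL by simp
      then have "L div L \<le> t div L" by (rule div_le_mono)
      then have "t div L \<ge> 1" using L_pos by simp
      then have aL: "L \<le> a" unfolding a_eq by simp
      have tm: "t mod L = L - 1" using False tmL by simp
      have ta: "t = a + (L - 1)" unfolding a_def using tm mod_less_eq_dividend[of t L] by linarith
      have tL': "L \<le> t" using tL by simp
      note W = kvs_win[of cs, OF cs tL', folded a_def v_def]
      have W1: "\<forall>s. a \<le> s \<and> s \<le> t \<longrightarrow> cs s \<le> v" using W by (rule conjunct1)
      have W2: "e \<le> v" using W by (rule conjunct1[OF conjunct2])
      have W3: "\<forall>bd. e \<le> bd \<longrightarrow> (\<forall>s. a \<le> s \<and> s \<le> t \<longrightarrow> cs s \<le> bd) \<longrightarrow> v \<le> bd"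
        using W by (rule conjunct2[OF conjunct2])
      have at0: "t0 \<le> a" using aL P by simp
      obtain s where s: "a \<le> s" "s < a + P" "cs s = c" using P2[OF at0] by blast
      have "s \<le> t" using s(2) ta P by simp
      then have v1: "c \<le> v" "e \<le> v" using W1 W2 s by auto
      have "\<forall>s'. a \<le> s' \<and> s' \<le> t \<longrightarrow> cs s' \<le> max e c"
      proof (intro allI impI)
        fix s' assume "a \<le> s' \<and> s' \<le> t"
        then have "cs s' \<le> c" using P1 at0 by simp
        then show "cs s' \<le> max e c" by simp
      qed
      then have "v \<le> max e c" using W3 by simp
      then have "v = max e c" using v1 by simp
      then have "even v" using ev e_even unfolding c_def by (simp add: max_def)
      then show ?thesis by simp
    qed
    then show ?thesis using False k late[OF st] unfolding dead_def v_def cc_def by simp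
  qed
qed

end



lemma run_states:
  assumes "parity_automaton A m" "is_run A w r" shows "r i \<in> states A"
proof (induction i)
  case 0 then show ?case using assms unfolding parity_automaton_def is_run_def by blast
next
  case (Suc i)
  have "r (Suc i) \<in> trans A (r i) (w i)" using assms(2) unfolding is_run_def by blast
  then show ?case using Suc assms(1) unfolding parity_automaton_def by blast
qed

lemma det_unique:
  assumes "parity_automaton A m" "deterministic A" "q \<in> states A"
    "x \<in> trans A q a" "y \<in> trans A q a"
  shows "x = y"
proof -
  have sub: "trans A q a \<subseteq> states A" using assms(1,3) unfolding parity_automaton_def by blast
  have fin: "finite (trans A q a)" using assms(1) sub unfolding parity_automaton_def
    using finite_subset by metis
  have "card (trans A q a) \<le> Suc 0" using assms(2,3) unfolding deterministic_def by simp
  then show ?thesis using card_le_Suc0_iff_eq[OF fin] assms(4,5) by blast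
qed

lemma run_shift:
  assumes pa: "parity_automaton A m" and det: "deterministic A" and run: "is_run A w r"
    and eq: "r a = r b" and weq: "\<And>x. w (a + x) = w (b + x)"
  shows "r (a + x) = r (b + x)"
proof (induction x)
  case 0 then show ?case using eq by simp
next
  case (Suc x)
  have 1: "r (Suc (a + x)) \<in> trans A (r (a + x)) (w (a + x))" using run unfolding is_run_def by blast
  have 2: "r (Suc (b + x)) \<in> trans A (r (b + x)) (w (b + x))" using run unfolding is_run_def by blast
  have "r (Suc (a + x)) \<in> trans A (r (a + x)) (w (a + x))" by (rule 1)
  moreover have "r (Suc (b + x)) \<in> trans A (r (a + x)) (w (a + x))" using 2 Suc weq[of x] by simp
  ultimately have "r (Suc (a + x)) = r (Suc (b + x))"
    using det_unique[OF pa det run_states[OF pa run]] by blast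
  then show ?case by simp
qed

lemma lasso_period:
  assumes pa: "parity_automaton A m" and det: "deterministic A" and run: "is_run A w r"
    and w: "w = u \<frown> v\<^sup>\<omega>" and v: "v \<noteq> []" and len: "length (u @ v) = n"
  shows "\<exists>t0 P. 0 < P \<and> t0 + P \<le> n * card (states A) \<and> (\<forall>i\<ge>t0. r (i + P) = r i)"
proof -
  define p where "p = length u"
  define l where "l = length v"
  define N where "N = card (states A)"
  have l0: "0 < l" using v unfolding l_def by simp
  have finS: "finite (states A)" using pa unfolding parity_automaton_def by blast
  have "card (init A) = 1" using det unfolding deterministic_def by blast
  then have "init A \<noteq> {}" by auto
  moreover have "init A \<subseteq> states A" using pa unfolding parity_automaton_def by blast
  ultimately have "states A \<noteq> {}" by blast
  then have N1: "1 \<le> N" unfolding N_def using finS by (simp add: Suc_leI card_gt_0_iff)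
  have wper: "w (i + l) = w i" if "p \<le> i" for i
  proof -
    have "w (i + l) = v ! ((i + l - p) mod l)" unfolding w using that l0 by (simp add: p_def l_def)
    also have "(i + l - p) mod l = (i - p) mod l" using that
      by (metis Nat.add_diff_assoc2 mod_add_self2)
    also have "v ! ((i - p) mod l) = w i" unfolding w using that l0 by (simp add: p_def l_def)
    finally show ?thesis .
  qed
  have wperc: "w (i + c * l) = w i" if "p \<le> i" for i c
  proof (induction c)
    case 0 then show ?case by simp
  next
    case (Suc c)
    have "w (i + Suc c * l) = w ((i + c * l) + l)" by (simp add: algebra_simps)
    also have "\<dots> = w (i + c * l)" using wper that by simp
    finally show ?case using Suc by simp
  qed
  define \<phi> where "\<phi> = (\<lambda>i. r (p + i * l))"
  have img: "\<phi> ` {0..N} \<subseteq> states A" unfolding \<phi>_def using run_states[OF pa run] by blast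
  have "\<not> inj_on \<phi> {0..N}"
  proof
    assume "inj_on \<phi> {0..N}"
    then have "card (\<phi> ` {0..N}) = Suc N" by (simp add: card_image)
    moreover have "card (\<phi> ` {0..N}) \<le> N" using card_mono[OF finS img] N_def by simp
    ultimately show False by simp
  qed
  then obtain x y where xy: "x \<in> {0..N}" "y \<in> {0..N}" "\<phi> x = \<phi> y" "x \<noteq> y"
    unfolding inj_on_def by blast
  obtain i j where ij: "i < j" "j \<le> N" "\<phi> i = \<phi> j"
  proof (cases "x < y")
    case True then show ?thesis using that[of x y] xy by simp
  next
    case False then have "y < x" using xy(4) by simp
    then show ?thesis using that[of y x] xy by simp
  qed
  define t0 where "t0 = p + i * l"
  define P where "P = (j - i) * l"
  have iP: "i * l + (j - i) * l = j * l" using ij(1)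
    by (metis add_mult_distrib le_add_diff_inverse less_imp_le)
  have tP: "t0 + P = p + j * l" unfolding t0_def P_def using iP by simp
  have P0: "0 < P" unfolding P_def using ij(1) l0 by simp
  have "p + j * l \<le> p + N * l" using ij(2) by simp
  also have "\<dots> \<le> N * p + N * l" using N1 by simp
  also have "\<dots> = N * (p + l)" by (simp add: distrib_left)
  also have "p + l = n" using len unfolding p_def l_def by simp
  finally have bnd: "t0 + P \<le> n * N" using tP by (simp add: mult.commute)
  have r1: "r t0 = \<phi> i" unfolding \<phi>_def t0_def by simp
  have r2: "r (t0 + P) = \<phi> j" unfolding \<phi>_def tP by simp
  have req: "r t0 = r (t0 + P)" using ij(3) r1 r2 by simp
  have weq: "w (t0 + x) = w ((t0 + P) + x)" for x
  proof -
    have "(t0 + P) + x = (t0 + x) + (j - i) * l" unfolding P_def by linarith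
    then have "w ((t0 + P) + x) = w ((t0 + x) + (j - i) * l)" by (rule arg_cong[where f=w])
    also have "\<dots> = w (t0 + x)" by (rule wperc) (simp add: t0_def)
    finally show ?thesis by simp
  qed
  have sh: "r (t0 + x) = r ((t0 + P) + x)" for x
    using run_shift[OF pa det run req weq] .
  have "\<forall>i'\<ge>t0. r (i' + P) = r i'"
  proof (intro allI impI)
    fix i' assume "t0 \<le> i'"
    then have "i' = t0 + (i' - t0)" "i' + P = (t0 + P) + (i' - t0)" by simp_all
    then show "r (i' + P) = r i'" using sh[of "i' - t0"] by (simp add: add.commute)
  qed
  then show ?thesis using P0 bnd unfolding N_def by blast
qed

lemma rename:
  fixes B :: "('s, 'a) pa"
  assumes pa: "parity_automaton B k"
  shows "\<exists>A' :: (nat, 'a) pa. parity_automaton A' k \<and> (deterministic B \<longrightarrow> deterministic A')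
     \<and> card (states A') = card (states B) \<and> lang A' = lang B"
proof -
  define N where "N = card (states B)"
  have finS: "finite (states B)" using pa unfolding parity_automaton_def by blast
  obtain f where f: "bij_betw f (states B) {0..<N}" unfolding N_def using ex_bij_betw_finite_nat[OF finS] by blast
  define g where "g = inv_into (states B) f"
  have inj: "inj_on f (states B)" using bij_betw_imp_inj_on[OF f] .
  have fimg: "f ` states B = {0..<N}" using bij_betw_imp_surj_on[OF f] .
  have gf: "g (f s) = s" if "s \<in> states B" for s unfolding g_def using inv_into_f_f[OF inj that] .
  have gS: "g x \<in> states B" if "x \<in> {0..<N}" for x
    unfolding g_def using that fimg inv_into_into[of x f "states B"] by blast
  have fS: "f s \<in> {0..<N}" if "s \<in> states B" for s using that fimg by blast
  have initS: "init B \<subseteq> states B" using pa unfolding parity_automaton_def by blast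
  have transS: "trans B s a \<subseteq> states B" if "s \<in> states B" for s a
    using pa that unfolding parity_automaton_def by blast
  define A' :: "(nat, 'a) pa" where "A' = \<lparr>states = {0..<N}, init = f ` init B,
     trans = (\<lambda>x a. f ` trans B (g x) a), color = (\<lambda>x. color B (g x))\<rparr>"
  have "parity_automaton A' k"
    unfolding parity_automaton_def
  proof (intro conjI ballI allI)
    show "finite (states A')" unfolding A'_def by simp
    show "init A' \<subseteq> states A'" unfolding A'_def using initS fS by auto
  next
    fix q a assume "q \<in> states A'"
    then have "g q \<in> states B" using gS unfolding A'_def by simp
    then have s: "trans B (g q) a \<subseteq> states B" by (rule transS)
    have "f ` trans B (g q) a \<subseteq> {0..<N}"
      by (rule image_subsetI) (use s fS in blast)
    then show "trans A' q a \<subseteq> states A'" unfolding A'_def by simp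
  next
    fix q assume "q \<in> states A'"
    then have "g q \<in> states B" using gS unfolding A'_def by simp
    then show "color A' q < k" unfolding A'_def using pa unfolding parity_automaton_def by simp
  qed
  moreover have "deterministic B \<longrightarrow> deterministic A'"
  proof
    assume det: "deterministic B"
    have "card (init A') = card (init B)" unfolding A'_def
      using card_image[OF inj_on_subset[OF inj initS]] by simp
    moreover have "card (trans A' q a) \<le> 1" if "q \<in> states A'" for q a
    proof -
      have gq: "g q \<in> states B" using that gS unfolding A'_def by simp
      have "card (trans A' q a) = card (trans B (g q) a)" unfolding A'_def
        using card_image[OF inj_on_subset[OF inj transS[OF gq]]] by simp
      then show ?thesis using det gq unfolding deterministic_def by simp
    qed
    ultimately show "deterministic A'" using det unfolding deterministic_def by simp
  qed
  moreover have "card (states A') = card (states B)" unfolding A'_def N_def by simp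
  moreover have "lang A' = lang B"
  proof
    show "lang A' \<subseteq> lang B"
    proof
      fix w assume "w \<in> lang A'"
      then obtain r where r: "is_run A' w r" "accepting A' r" unfolding lang_def by blast
      have rS: "r i \<in> {0..<N}" for i
        using run_states[OF \<open>parity_automaton A' k\<close> r(1)] unfolding A'_def by simp
      have "is_run B w (\<lambda>i. g (r i))" unfolding is_run_def
      proof (intro conjI allI)
        have "r 0 \<in> f ` init B" using r(1) unfolding is_run_def A'_def by simp
        then obtain s where "s \<in> init B" "r 0 = f s" by blast
        then show "g (r 0) \<in> init B" using gf initS by auto
      next
        fix i
        have "r (Suc i) \<in> f ` trans B (g (r i)) (w i)" using r(1) unfolding is_run_def A'_def by simp
        then obtain s where s: "s \<in> trans B (g (r i)) (w i)" "r (Suc i) = f s" by blast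
        have "s \<in> states B" using s(1) transS gS rS by blast
        then show "g (r (Suc i)) \<in> trans B (g (r i)) (w i)" using s gf by simp
      qed
      moreover have "accepting B (\<lambda>i. g (r i))" using r(2) unfolding accepting_def A'_def by simp
      ultimately show "w \<in> lang B" unfolding lang_def by blast
    qed
  next
    show "lang B \<subseteq> lang A'"
    proof
      fix w assume "w \<in> lang B"
      then obtain r where r: "is_run B w r" "accepting B r" unfolding lang_def by blast
      have rS: "r i \<in> states B" for i using run_states[OF pa r(1)] .
      have "is_run A' w (\<lambda>i. f (r i))" unfolding is_run_def A'_def
      proof (simp, intro conjI allI)
        show "f (r 0) \<in> f ` init B" using r(1) unfolding is_run_def by blast
      next
        fix i
        have "r (Suc i) \<in> trans B (r i) (w i)" using r(1) unfolding is_run_def by blast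
        then show "f (r (Suc i)) \<in> f ` trans B (g (f (r i))) (w i)" using gf[OF rS] by simp
      qed
      moreover have "accepting A' (\<lambda>i. f (r i))" using r(2) unfolding accepting_def A'_def
        using gf[OF rS] by simp
      ultimately show "w \<in> lang A'" unfolding lang_def by blast
    qed
  qed
  ultimately show ?thesis by blast
qed




locale cons =
  fixes A :: "('q, 'a) pa" and m m' n :: nat
  assumes pa: "parity_automaton A m" and det: "deterministic A"
    and m'0: "0 < m'" and mm: "m' < m" and n0: "0 < n"
begin

definition "Lc = n * card (states A)"
definition "ee = (if even (m' - 1) then m' - 1 else m' - 2)"
definition "Bc = m - m' + 2"

lemma finQ: "finite (states A)" using pa unfolding parity_automaton_def by blast

lemma Q_ne: "states A \<noteq> {}"
proof -
  have "card (init A) = 1" using det unfolding deterministic_def by blast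
  then have "init A \<noteq> {}" by auto
  moreover have "init A \<subseteq> states A" using pa unfolding parity_automaton_def by blast
  ultimately show ?thesis by blast
qed

lemma cardQ: "0 < card (states A)" using finQ Q_ne by (simp add: card_gt_0_iff)

lemma ee_le: "ee \<le> m' - 1" unfolding ee_def by (split if_split) arith
lemma ee_ge: "m' \<le> ee + 2" unfolding ee_def by (split if_split) arith

sublocale win Lc m ee
proof
  show "0 < Lc" unfolding Lc_def using n0 cardQ by simp
  show "ee < m - 1" using ee_le mm m'0 by simp
  show "even ee"
  proof (cases "even (m' - 1)")
    case True then show ?thesis unfolding ee_def by simp
  next
    case False
    then obtain k where k: "m' - 1 = 2 * k + 1" using oddE by blast
    then have "m' - 2 = 2 * k" by simp
    then show ?thesis unfolding ee_def using False by simp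
  qed
qed

lemma col_lt: "q \<in> states A \<Longrightarrow> color A q < m" using pa unfolding parity_automaton_def by blast

definition BB :: "('q \<times> (nat \<times> nat), 'a) pa" where
  "BB = \<lparr>states = states A \<times> ({0..Lc} \<times> {ee..<ee + Bc}),
         init = (\<lambda>q. (q, (0, m - 1))) ` init A,
         trans = (\<lambda>s a. (\<lambda>q'. (q', stp (snd s) (color A q'))) `
                     {q' \<in> trans A (fst s) a. \<not> dead (snd s) (color A q')}),
         color = (\<lambda>s. min (color A (fst s)) ee)\<rparr>"

lemma trans_BB_iff:
  "x \<in> trans BB s a \<longleftrightarrow> fst x \<in> trans A (fst s) a \<and> \<not> dead (snd s) (color A (fst x))
      \<and> snd x = stp (snd s) (color A (fst x))"
  unfolding BB_def by (cases x) auto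

lemma init_BB_iff: "x \<in> init BB \<longleftrightarrow> fst x \<in> init A \<and> snd x = (0, m - 1)"
  unfolding BB_def by (cases x) auto

lemma BB_card: "card (states BB) = (n * card (states A) + 1) * card (states A) * (m - m' + 2)"
proof -
  have "card (states BB) = card (states A) * ((Lc + 1) * Bc)"
    unfolding BB_def by (simp add: card_cartesian_product)
  then show ?thesis unfolding Lc_def Bc_def by (simp add: algebra_simps)
qed

lemma BB_pa: "parity_automaton BB m'"
  unfolding parity_automaton_def
proof (intro conjI ballI allI)
  show "finite (states BB)" unfolding BB_def using finQ by simp
  have "m - 1 < ee + Bc" unfolding Bc_def using ee_ge mm by simp
  moreover have "ee \<le> m - 1" using e_lt by simp
  moreover have "init A \<subseteq> states A" using pa unfolding parity_automaton_def by blast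
  ultimately show "init BB \<subseteq> states BB" unfolding BB_def by auto
next
  fix s a assume s: "s \<in> states BB"
  show "trans BB s a \<subseteq> states BB"
  proof
    fix x assume x: "x \<in> trans BB s a"
    then have x1: "fst x \<in> trans A (fst s) a" and x2: "snd x = stp (snd s) (color A (fst x))"
      using trans_BB_iff by blast+
    have fs: "fst s \<in> states A" using s unfolding BB_def by auto
    then have q': "fst x \<in> states A" using x1 pa unfolding parity_automaton_def by blast
    have c: "color A (fst x) < m" using col_lt[OF q'] .
    have k: "fst (snd s) \<le> Lc" and v1: "ee \<le> snd (snd s)" and v2: "snd (snd s) < ee + Bc"
      using s unfolding BB_def by auto
    have mB: "m \<le> ee + Bc" unfolding Bc_def using ee_ge mm by simp
    have "fst (snd x) \<le> Lc \<and> ee \<le> snd (snd x) \<and> snd (snd x) < ee + Bc"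
      unfolding x2 stp_def using k v1 v2 c mB by auto
    then show "x \<in> states BB" using q' unfolding BB_def by (cases x) auto
  qed
next
  fix s assume s: "s \<in> states BB"
  have "ee < m'" using ee_le m'0 by simp
  then show "color BB s < m'" unfolding BB_def by simp
qed

lemma BB_det: "deterministic BB"
  unfolding deterministic_def
proof (intro conjI ballI allI)
  have ij: "inj_on (\<lambda>q. (q, (0, m - 1))) (init A)" by (rule inj_onI) simp
  have "card (init BB) = card (init A)" using card_image[OF ij] unfolding BB_def by simp
  then show "card (init BB) = 1" using det unfolding deterministic_def by simp
next
  fix s a assume s: "s \<in> states BB"
  have fs: "fst s \<in> states A" using s unfolding BB_def by auto
  have sub: "trans A (fst s) a \<subseteq> states A" using fs pa unfolding parity_automaton_def by blast
  have fin: "finite (trans A (fst s) a)" using finite_subset[OF sub finQ] .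
  let ?S = "{q' \<in> trans A (fst s) a. \<not> dead (snd s) (color A q')}"
  have "card (trans BB s a) \<le> card ?S" unfolding BB_def
    using card_image_le[of ?S] fin by simp
  also have "\<dots> \<le> card (trans A (fst s) a)" using fin by (intro card_mono) auto
  also have "\<dots> \<le> 1" using det fs unfolding deterministic_def by simp
  finally show "card (trans BB s a) \<le> 1" .
qed

lemma BB_run:
  assumes "is_run BB w s"
  defines "cs \<equiv> \<lambda>t. color A (fst (s t))"
  shows "is_run A w (\<lambda>t. fst (s t))" "\<And>t. snd (s t) = kvs cs t"
    "\<And>t. \<not> dead (kvs cs t) (cs (Suc t))"
proof -
  have i: "fst (s 0) \<in> init A" "snd (s 0) = (0, m - 1)"
    using assms(1) init_BB_iff unfolding is_run_def by blast+
  have t: "fst (s (Suc t)) \<in> trans A (fst (s t)) (w t)"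
     "\<not> dead (snd (s t)) (cs (Suc t))" "snd (s (Suc t)) = stp (snd (s t)) (cs (Suc t))" for t
    using assms(1) trans_BB_iff unfolding is_run_def cs_def by blast+
  show "is_run A w (\<lambda>t. fst (s t))" unfolding is_run_def using i t by blast
  show kv: "snd (s t) = kvs cs t" for t
  proof (induction t)
    case 0 then show ?case using i by simp
  next
    case (Suc t) then show ?case using t(3)[of t] by simp
  qed
  show "\<not> dead (kvs cs t) (cs (Suc t))" for t using t(2)[of t] kv[of t] by simp
qed

lemma BB_run_back:
  assumes "is_run A w r"
  defines "cs \<equiv> \<lambda>t. color A (r t)"
  assumes nd: "\<And>t. \<not> dead (kvs cs t) (cs (Suc t))"
  shows "is_run BB w (\<lambda>t. (r t, kvs cs t))"
  unfolding is_run_def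
proof (intro conjI allI)
  show "(r 0, kvs cs 0) \<in> init BB" using assms(1) init_BB_iff unfolding is_run_def by simp
next
  fix t
  have "r (Suc t) \<in> trans A (r t) (w t)" using assms(1) unfolding is_run_def by blast
  then show "(r (Suc t), kvs cs (Suc t)) \<in> trans BB (r t, kvs cs t) (w t)"
    unfolding trans_BB_iff using nd[of t] unfolding cs_def by simp
qed

lemma acc_infs: "accepting X r \<longleftrightarrow> even (Max (infs (\<lambda>i. color X (r i))))"
  unfolding accepting_def infs_def by simp

lemma mono_min: "mono (\<lambda>c::nat. min c ee)" by (rule monoI) simp

lemma BB_sound: "lang BB \<subseteq> lang A"
proof
  fix w assume "w \<in> lang BB"
  then obtain s where s: "is_run BB w s" "accepting BB s" unfolding lang_def by blast
  define cs where "cs = (\<lambda>t. color A (fst (s t)))"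
  note R = BB_run[OF s(1), folded cs_def]
  have nd: "\<not> dead (kvs cs t) (cs (Suc t))" for t using R(3)[of t] unfolding cs_def by simp
  have csm: "cs i < m" for i unfolding cs_def using col_lt run_states[OF pa R(1)] by blast
  have "even (Max (infs (\<lambda>i. min (cs i) ee)))" using s(2) unfolding acc_infs cs_def BB_def by simp
  then have "even (min (Max (infs cs)) ee)" using infs_mono_Max[of cs m "\<lambda>c. min c ee", OF csm mono_min] by simp
  then have "even (Max (infs cs))" using sound[of cs, OF csm nd] by blast
  then have "accepting A (\<lambda>t. fst (s t))" unfolding acc_infs cs_def .
  then show "w \<in> lang A" using R(1) unfolding lang_def by blast
qed

lemma BB_complete: "lasso_lang n (lang A) \<subseteq> lang BB"
proof
  fix w assume "w \<in> lasso_lang n (lang A)"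
  then obtain u v where w: "w \<in> lang A" "v \<noteq> []" "length (u @ v) = n" "w = u \<frown> v\<^sup>\<omega>"
    unfolding lasso_lang_def by blast
  then obtain r where r: "is_run A w r" "accepting A r" unfolding lang_def by blast
  obtain t0 P where tp: "0 < P" "t0 + P \<le> n * card (states A)" "\<And>i. t0 \<le> i \<Longrightarrow> r (i + P) = r i"
    using lasso_period[OF pa det r(1) w(4) w(2) w(3)] by blast
  define cs where "cs = (\<lambda>t. color A (r t))"
  have csm: "cs i < m" for i unfolding cs_def using col_lt run_states[OF pa r(1)] by blast
  have per: "cs (i + P) = cs i" if "t0 \<le> i" for i unfolding cs_def using tp(3)[OF that] by simp
  have ev: "even (Max (infs cs))" using r(2) unfolding acc_infs cs_def .
  have nd: "\<not> dead (kvs cs t) (cs (Suc t))" for t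
    using complete[of cs P t0, OF csm tp(1) _ per ev] tp(2) unfolding Lc_def by blast
  have run: "is_run BB w (\<lambda>t. (r t, kvs cs t))" using BB_run_back[OF r(1)] nd unfolding cs_def by blast
  have "Max (infs (\<lambda>i. min (cs i) ee)) = min (Max (infs cs)) ee"
    using infs_mono_Max[of cs m "\<lambda>c. min c ee", OF csm mono_min] .
  moreover have "even (min (Max (infs cs)) ee)" using ev e_even by (simp add: min_def)
  ultimately have "accepting BB (\<lambda>t. (r t, kvs cs t))" unfolding acc_infs BB_def cs_def by simp
  then show "w \<in> lang BB" using run unfolding lang_def by blast
qed

end


theorem theorem6:
  fixes A :: "('q, 'a::finite) pa" and m m' n :: nat
  assumes "parity_automaton A m" and "deterministic A"
    and "0 < m'" and "m' < m"
  shows "\<exists>A' :: (nat, 'a) pa.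
           parity_automaton A' m' \<and> deterministic A' \<and>
           card (states A') = (n * card (states A) + 1) * card (states A) * (m - m' + 2) \<and>
           lang A' \<subseteq> lang A \<and>
           lasso_lang n (lang A') = lasso_lang n (lang A)"
proof (cases "n = 0")
  case True
  define N where "N = (n * card (states A) + 1) * card (states A) * (m - m' + 2)"
  have finQ: "finite (states A)" using assms(1) unfolding parity_automaton_def by blast
  have "card (init A) = 1" using assms(2) unfolding deterministic_def by blast
  then have "init A \<noteq> {}" by auto
  moreover have "init A \<subseteq> states A" using assms(1) unfolding parity_automaton_def by blast
  ultimately have "states A \<noteq> {}" by blast
  then have "0 < card (states A)" using finQ by (simp add: card_gt_0_iff)
  then have N0: "0 < N" unfolding N_def by simp
  define A0 :: "(nat, 'a) pa" where
    "A0 = \<lparr>states = {0..<N}, init = {0}, trans = (\<lambda>_ _. {}), color = (\<lambda>_. 0)\<rparr>"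
  have "parity_automaton A0 m'" unfolding parity_automaton_def A0_def using N0 assms(3) by simp
  moreover have "deterministic A0" unfolding deterministic_def A0_def by simp
  moreover have "card (states A0) = N" unfolding A0_def by simp
  moreover have "lang A0 = {}" unfolding lang_def is_run_def A0_def by simp
  moreover have "lasso_lang n X = {}" for X :: "'a word set"
    unfolding lasso_lang_def using True by auto
  ultimately show ?thesis unfolding N_def by blast
next
  case False
  interpret C: cons A m m' n using assms False by unfold_locales simp_all
  obtain A' :: "(nat, 'a) pa" where A': "parity_automaton A' m'" "deterministic C.BB \<longrightarrow> deterministic A'"
    "card (states A') = card (states C.BB)" "lang A' = lang C.BB"
    using rename[OF C.BB_pa] by blast
  have sub: "lang A' \<subseteq> lang A" using A'(4) C.BB_sound by simp
  have "lasso_lang n (lang A') = lasso_lang n (lang A)"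
  proof
    show "lasso_lang n (lang A') \<subseteq> lasso_lang n (lang A)" using sub unfolding lasso_lang_def by blast
  next
    show "lasso_lang n (lang A) \<subseteq> lasso_lang n (lang A')"
    proof
      fix w assume w: "w \<in> lasso_lang n (lang A)"
      then have "w \<in> lang A'" using C.BB_complete A'(4) by blast
      then show "w \<in> lasso_lang n (lang A')" using w unfolding lasso_lang_def by blast
    qed
  qed
  then show ?thesis using A' C.BB_det C.BB_card sub by (intro exI[of _ A']) simp
qed

end
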